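(* For every formula $\varphi$ of $\mathcal L^{\bigcirc}_\square$: $\varphi$ is derivable in $\mathbf{GLC}$ if and only if $\varphi$ is valid, with respect to the $d$-semantics, on every dynamic topological system $\langle X,\tau,f\rangle$ with $X$ finite and $\langle X,\tau\rangle$ scattered.
   Context: Fix a non-empty set $\mathsf{PV}$ of propositional variables. The language $\mathcal L^{\bigcirc}_\square$ is given by $\varphi::= p\mid \varphi\wedge\varphi\mid\neg\varphi\mid\square\varphi\mid\bigcirc\varphi$ with $p\in\mathsf{PV}$. Axioms and rules: Taut; K: $\square(\varphi\to\psi)\to(\square\varphi\to\square\psi)$; 4: $\square\varphi\to\square\square\varphi$; L: $\square(\square\varphi\to\varphi)\to\square\varphi$; ${\rm Next}_\neg$: $\neg\bigcirc\varphi\leftrightarrow\bigcirc\neg\varphi$; ${\rm Next}_\wedge$: $\bigcirc(\varphi\wedge\psi)\leftrightarrow\bigcirc\varphi\wedge\bigcirc\psi$; C: $\bigcirc\varphi\wedge\bigcirc\square\varphi\to\square\bigcirc\varphi$; rules modus ponens, ${\rm Nec}_\square$, ${\rm Nec}_\bigcirc$. $\mathbf{GLC}$ is axiomatised by Taut, K, 4, L, ${\rm Next}_\neg$, ${\rm Next}_\wedge$, C and closed under these rules. A dynamic topological system (DTS) is $\langle X,\tau,f\rangle$ with $f\colon X\to X$ continuous. The Cantor derivative $d(A)$ of $A\subseteq X$ is the set of $x$ in the closure of $A\setminus\{x\}$. A space is scattered if for every $S\subseteq X$, $S\subseteq d(S)$ implies $S=\varnothing$. Under a valuation $\nu\colon\mathsf{PV}\to\wp(X)$: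 $\|p\|=\nu(p)$, $\|\neg\varphi\|=X\setminus\|\varphi\|$, $\|\varphi\wedge\psi\|=\|\varphi\|\cap\|\psi\|$, $\|\square\varphi\|=X\setminus d(\|\neg\varphi\|)$, $\|\bigcirc\varphi\|=f^{-1}(\|\varphi\|)$. Valid on a DTS means truth set $X$ under every valuation. *)

theory Defs
  imports "HOL-Analysis.Analysis"
begin

datatype 'p form =
    Var 'p
  | And "'p form" "'p form"
  | Neg "'p form"
  | Box "'p form"
  | Nxt "'p form"

definition Imp :: "'p form \<Rightarrow> 'p form \<Rightarrow> 'p form" where
  "Imp a b = Neg (And a (Neg b))"

definition Iff :: "'p form \<Rightarrow> 'p form \<Rightarrow> 'p form" where
  "Iff a b = And (Imp a b) (Imp b a)"

fun tval :: "('p form \<Rightarrow> bool) \<Rightarrow> 'p form \<Rightarrow> bool" where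
  "tval v (Var p) = v (Var p)"
| "tval v (And a b) = (tval v a \<and> tval v b)"
| "tval v (Neg a) = (\<not> tval v a)"
| "tval v (Box a) = v (Box a)"
| "tval v (Nxt a) = v (Nxt a)"

definition taut :: "'p form \<Rightarrow> bool" where
  "taut \<phi> \<longleftrightarrow> (\<forall>v. tval v \<phi>)"

inductive GLC :: "'p form \<Rightarrow> bool" where
  Taut: "taut \<phi> \<Longrightarrow> GLC \<phi>"
| K: "GLC (Imp (Box (Imp \<phi> \<psi>)) (Imp (Box \<phi>) (Box \<psi>)))"
| Four: "GLC (Imp (Box \<phi>) (Box (Box \<phi>)))"
| L: "GLC (Imp (Box (Imp (Box \<phi>) \<phi>)) (Box \<phi>))"
| Next_neg: "GLC (Iff (Neg (Nxt \<phi>)) (Nxt (Neg \<phi>)))"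
| Next_and: "GLC (Iff (Nxt (And \<phi> \<psi>)) (And (Nxt \<phi>) (Nxt \<psi>)))"
| C: "GLC (Imp (And (Nxt \<phi>) (Nxt (Box \<phi>))) (Box (Nxt \<phi>)))"
| MP: "GLC (Imp \<phi> \<psi>) \<Longrightarrow> GLC \<phi> \<Longrightarrow> GLC \<psi>"
| Nec_box: "GLC \<phi> \<Longrightarrow> GLC (Box \<phi>)"
| Nec_next: "GLC \<phi> \<Longrightarrow> GLC (Nxt \<phi>)"

definition DTS :: "'a topology \<Rightarrow> ('a \<Rightarrow> 'a) \<Rightarrow> bool" where
  "DTS T f \<longleftrightarrow> continuous_map T T f"

definition scattered :: "'a topology \<Rightarrow> bool" where
  "scattered T \<longleftrightarrow> (\<forall>S. S \<subseteq> topspace T \<longrightarrow> S \<subseteq> T derived_set_of S \<longrightarrow> S = {})"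

fun sem :: "'a topology \<Rightarrow> ('a \<Rightarrow> 'a) \<Rightarrow> ('p \<Rightarrow> 'a set) \<Rightarrow> 'p form \<Rightarrow> 'a set" where
  "sem T f \<nu> (Var p) = \<nu> p"
| "sem T f \<nu> (And a b) = sem T f \<nu> a \<inter> sem T f \<nu> b"
| "sem T f \<nu> (Neg a) = topspace T - sem T f \<nu> a"
| "sem T f \<nu> (Box a) = topspace T - T derived_set_of (topspace T - sem T f \<nu> a)"
| "sem T f \<nu> (Nxt a) = {x \<in> topspace T. f x \<in> sem T f \<nu> a}"

definition valid_on :: "'a topology \<Rightarrow> ('a \<Rightarrow> 'a) \<Rightarrow> 'p form \<Rightarrow> bool" where
  "valid_on T f \<phi> \<longleftrightarrow>
     (\<forall>\<nu>. (\<forall>p. \<nu> p \<subseteq> topspace T) \<longrightarrow> sem T f \<nu> \<phi> = topspace T)"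

end

theory Submission
  imports Defs
begin


definition Top :: "'p form" where "Top = Neg (And (Var undefined) (Neg (Var undefined)))"
definition Dia :: "'p form \<Rightarrow> 'p form" where "Dia a = Neg (Box (Neg a))"
definition cons :: "'p form \<Rightarrow> bool" where "cons a \<longleftrightarrow> \<not> GLC (Neg a)"

fun conj :: "'p form list \<Rightarrow> 'p form" where
  "conj [] = Top"
| "conj (x # xs) = And x (conj xs)"

definition lit :: "'p form set \<Rightarrow> 'p form \<Rightarrow> 'p form" where
  "lit A \<theta> = (if \<theta> \<in> A then \<theta> else Neg \<theta>)"

definition dl :: "'p form list \<Rightarrow> 'p form set \<Rightarrow> 'p form" where
  "dl xs A = conj (map (lit A) xs)"

lemma tval_Top[simp]: "tval v Top" by (simp add: Top_def)
lemma tval_Imp[simp]: "tval v (Imp a b) = (tval v a \<longrightarrow> tval v b)" by (simp add: Imp_def)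
lemma tval_Iff[simp]: "tval v (Iff a b) = (tval v a \<longleftrightarrow> tval v b)" by (auto simp add: Iff_def)
lemma tval_Dia[simp]: "tval v (Dia a) = (\<not> v (Box (Neg a)))" by (simp add: Dia_def)
lemma tval_conj[simp]: "tval v (conj xs) = (\<forall>x\<in>set xs. tval v x)" by (induction xs) auto
lemma tval_lit[simp]: "tval v (lit A \<theta>) = (if \<theta> \<in> A then tval v \<theta> else \<not> tval v \<theta>)"
  by (simp add: lit_def)
lemma tval_dl: "\<theta> \<in> set xs \<Longrightarrow> tval v (dl xs A) \<Longrightarrow> (tval v \<theta> \<longleftrightarrow> \<theta> \<in> A)"
  by (auto simp add: dl_def split: if_splits)
lemma tval_dl_iff: "tval v (dl xs A) = (\<forall>\<theta>\<in>set xs. tval v \<theta> \<longleftrightarrow> \<theta> \<in> A)"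
  by (auto simp add: dl_def split: if_splits)

lemma dl_cong: "(\<And>x. x \<in> set xs \<Longrightarrow> x \<in> A \<longleftrightarrow> x \<in> B) \<Longrightarrow> dl xs A = dl xs B"
  unfolding dl_def lit_def by (rule arg_cong[where f=conj]) auto

lemma taut_I: "(\<And>v. tval v a) \<Longrightarrow> taut a" by (simp add: taut_def)

lemma pmp: "GLC a \<Longrightarrow> (\<And>v. tval v a \<Longrightarrow> tval v b) \<Longrightarrow> GLC b"
  by (rule GLC.MP[of a]) (auto intro!: GLC.Taut simp: taut_def)

lemma pmp2: "GLC a \<Longrightarrow> GLC b \<Longrightarrow> (\<And>v. tval v a \<Longrightarrow> tval v b \<Longrightarrow> tval v c) \<Longrightarrow> GLC c"
proof -
  assume a: "GLC a" "GLC b" and h: "\<And>v. tval v a \<Longrightarrow> tval v b \<Longrightarrow> tval v c"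
  have "GLC (Imp a (Imp b c))" by (rule GLC.Taut) (auto simp: taut_def h)
  then have "GLC (Imp b c)" using a GLC.MP by blast
  then show ?thesis using a GLC.MP by blast
qed

lemma pmp3: "GLC a \<Longrightarrow> GLC b \<Longrightarrow> GLC c \<Longrightarrow> (\<And>v. tval v a \<Longrightarrow> tval v b \<Longrightarrow> tval v c \<Longrightarrow> tval v d) \<Longrightarrow> GLC d"
proof -
  assume a: "GLC a" "GLC b" "GLC c" and h: "\<And>v. tval v a \<Longrightarrow> tval v b \<Longrightarrow> tval v c \<Longrightarrow> tval v d"
  have "GLC (And a b)" by (rule pmp2[OF a(1,2)]) auto
  then show ?thesis by (rule pmp2[OF _ a(3)]) (auto intro: h)
qed

lemma taut_GLC: "(\<And>v. tval v a) \<Longrightarrow> GLC a" by (rule GLC.Taut) (simp add: taut_def)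

lemma box_mono: "GLC (Imp a b) \<Longrightarrow> GLC (Imp (Box a) (Box b))"
  using GLC.MP[OF GLC.K GLC.Nec_box] by blast

lemma box_and: "GLC (Imp (And (Box a) (Box b)) (Box (And a b)))"
proof -
  have "GLC (Imp a (Imp b (And a b)))" by (rule taut_GLC) simp
  then have 1: "GLC (Imp (Box a) (Box (Imp b (And a b))))" by (rule box_mono)
  have 2: "GLC (Imp (Box (Imp b (And a b))) (Imp (Box b) (Box (And a b))))" by (rule GLC.K)
  show ?thesis by (rule pmp2[OF 1 2]) auto
qed

lemma nxt_neg1: "GLC (Imp (Nxt (Neg a)) (Neg (Nxt a)))"
  by (rule pmp[OF GLC.Next_neg[of a]]) auto
lemma nxt_neg2: "GLC (Imp (Neg (Nxt a)) (Nxt (Neg a)))"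
  by (rule pmp[OF GLC.Next_neg[of a]]) auto
lemma nxt_and1: "GLC (Imp (And (Nxt a) (Nxt b)) (Nxt (And a b)))"
  by (rule pmp[OF GLC.Next_and[of a b]]) auto
lemma nxt_and2: "GLC (Imp (Nxt (And a b)) (Nxt a))"
  by (rule pmp[OF GLC.Next_and[of a b]]) auto

lemma nxt_mono: "GLC (Imp a b) \<Longrightarrow> GLC (Imp (Nxt a) (Nxt b))"
proof -
  assume "GLC (Imp a b)"
  then have 1: "GLC (Nxt (Neg (And a (Neg b))))" using GLC.Nec_next by (simp add: Imp_def)
  have 2: "GLC (Imp (Nxt (Neg (And a (Neg b)))) (Neg (Nxt (And a (Neg b)))))" by (rule nxt_neg1)
  have 3: "GLC (Imp (And (Nxt a) (Nxt (Neg b))) (Nxt (And a (Neg b))))" by (rule nxt_and1)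
  have 4: "GLC (Imp (Neg (Nxt b)) (Nxt (Neg b)))" by (rule nxt_neg2)
  have 5: "GLC (Neg (Nxt (And a (Neg b))))" by (rule pmp2[OF 1 2]) auto
  show ?thesis by (rule pmp3[OF 5 3 4]) auto
qed



lemma cons_mono: "GLC (Imp a b) \<Longrightarrow> cons a \<Longrightarrow> cons b"
  unfolding cons_def using pmp2 by fastforce

lemma cons_tval: "cons a \<Longrightarrow> \<exists>v. tval v a"
  unfolding cons_def using taut_GLC[of "Neg a"] by auto

lemma cons_split: "cons a \<Longrightarrow> cons (And a \<theta>) \<or> cons (And a (Neg \<theta>))"
  unfolding cons_def using pmp2 by fastforce

lemma dia_L3g: "cons (And X (Dia Y)) \<Longrightarrow> GLC (Imp X (Box Z)) \<Longrightarrow> cons (And Y Z)"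
proof -
  assume c: "cons (And X (Dia Y))" and h: "GLC (Imp X (Box Z))"
  show "cons (And Y Z)"
  proof (rule ccontr)
    assume "\<not> cons (And Y Z)"
    then have "GLC (Neg (And Y Z))" by (simp add: cons_def)
    then have "GLC (Imp Z (Neg Y))" by (rule pmp) auto
    then have "GLC (Imp (Box Z) (Box (Neg Y)))" by (rule box_mono)
    then have "GLC (Neg (And X (Dia Y)))" by (rule pmp2[OF h]) (auto simp: Dia_def)
    then show False using c by (simp add: cons_def)
  qed
qed

lemma dia_cons: "cons (And X (Dia Y)) \<Longrightarrow> cons Y"
proof -
  assume c: "cons (And X (Dia Y))"
  have "GLC (Box Top)" by (rule GLC.Nec_box, rule taut_GLC) simp
  then have "GLC (Imp X (Box Top))" by (rule pmp) auto
  from dia_L3g[OF c this] show ?thesis by (rule cons_mono[rotated]) (rule taut_GLC, simp)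
qed

lemma dia_mono: "GLC (Imp Y Y') \<Longrightarrow> cons (And X (Dia Y)) \<Longrightarrow> cons (And X (Dia Y'))"
proof -
  assume h: "GLC (Imp Y Y')" and c: "cons (And X (Dia Y))"
  have "GLC (Imp (Neg Y') (Neg Y))" by (rule pmp[OF h]) auto
  then have b: "GLC (Imp (Box (Neg Y')) (Box (Neg Y)))" by (rule box_mono)
  show ?thesis by (rule cons_mono[OF _ c], rule pmp[OF b]) (auto simp: Dia_def)
qed

lemma dia_split: "cons (And X (Dia Y)) \<Longrightarrow> cons (And X (Dia (And Y \<theta>))) \<or> cons (And X (Dia (And Y (Neg \<theta>))))"
proof (rule ccontr)
  assume c: "cons (And X (Dia Y))" and n: "\<not> (cons (And X (Dia (And Y \<theta>))) \<or> cons (And X (Dia (And Y (Neg \<theta>)))))"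
  then have 1: "GLC (Imp X (Box (Neg (And Y \<theta>))))" and 2: "GLC (Imp X (Box (Neg (And Y (Neg \<theta>)))))"
    by (auto simp: cons_def Dia_def intro: pmp)
  have 3: "GLC (Imp (And (Box (Neg (And Y \<theta>))) (Box (Neg (And Y (Neg \<theta>))))) (Box (And (Neg (And Y \<theta>)) (Neg (And Y (Neg \<theta>))))))"
    by (rule box_and)
  have "GLC (Imp (And (Neg (And Y \<theta>)) (Neg (And Y (Neg \<theta>)))) (Neg Y))" by (rule taut_GLC) auto
  then have 4: "GLC (Imp (Box (And (Neg (And Y \<theta>)) (Neg (And Y (Neg \<theta>))))) (Box (Neg Y)))" by (rule box_mono)
  have 5: "GLC (Imp X (Box (And (Neg (And Y \<theta>)) (Neg (And Y (Neg \<theta>))))))"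
    by (rule pmp3[OF 1 2 3]) auto
  have "GLC (Neg (And X (Dia Y)))" by (rule pmp2[OF 5 4]) (auto simp: Dia_def)
  then show False using c by (simp add: cons_def)
qed

lemma lindenbaum:
  assumes split: "\<And>a \<theta>. P a \<Longrightarrow> P (And a \<theta>) \<or> P (And a (Neg \<theta>))"
    and mono: "\<And>a b. GLC (Imp a b) \<Longrightarrow> P a \<Longrightarrow> P b"
  shows "distinct xs \<Longrightarrow> P a \<Longrightarrow> \<exists>A \<subseteq> set xs. P (And a (dl xs A))"
proof (induction xs arbitrary: a)
  case Nil
  have "P (And a (dl [] {}))" by (rule mono[OF _ Nil(2)], rule taut_GLC) (simp add: dl_def)
  then show ?case by blast
next
  case (Cons \<theta> xs)
  have nd: "\<theta> \<notin> set xs" "distinct xs" using Cons.prems by auto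
  from split[OF Cons.prems(2)] show ?case
  proof
    assume "P (And a \<theta>)"
    from Cons.IH[OF nd(2) this] obtain A where A: "A \<subseteq> set xs" "P (And (And a \<theta>) (dl xs A))" by blast
    have e: "dl xs (insert \<theta> A) = dl xs A" by (rule dl_cong) (use nd in auto)
    have "P (And a (dl (\<theta> # xs) (insert \<theta> A)))"
      using nd(1) by (intro mono[OF _ A(2)] taut_GLC) (auto simp: e tval_dl_iff)
    then show ?thesis using A(1) by (intro exI[of _ "insert \<theta> A"]) auto
  next
    assume "P (And a (Neg \<theta>))"
    from Cons.IH[OF nd(2) this] obtain A where A: "A \<subseteq> set xs" "P (And (And a (Neg \<theta>)) (dl xs A))" by blast
    have "\<theta> \<notin> A" using A(1) nd by auto
    then have "P (And a (dl (\<theta> # xs) A))"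
      by (intro mono[OF _ A(2)] taut_GLC) (simp add: dl_def lit_def)
    then show ?thesis using A(1) by (intro exI[of _ A]) auto
  qed
qed



fun nd :: "'p form \<Rightarrow> nat" where
  "nd (Var p) = 0"
| "nd (And a b) = max (nd a) (nd b)"
| "nd (Neg a) = nd a"
| "nd (Box a) = nd a"
| "nd (Nxt a) = Suc (nd a)"

fun subl :: "'p form \<Rightarrow> 'p form list" where
  "subl (Var p) = [Var p]"
| "subl (And a b) = And a b # subl a @ subl b"
| "subl (Neg a) = Neg a # subl a"
| "subl (Box a) = Box a # subl a"
| "subl (Nxt a) = Nxt a # subl a"

lemma subl_self: "a \<in> set (subl a)" by (cases a) auto

lemma subl_trans: "x \<in> set (subl y) \<Longrightarrow> set (subl x) \<subseteq> set (subl y)"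
  by (induction y) (auto simp: subl_self)

lemma dl_pos: "\<theta> \<in> set xs \<Longrightarrow> tval v (dl xs A) \<Longrightarrow> \<theta> \<in> A \<Longrightarrow> tval v \<theta>"
  using tval_dl by blast
lemma dl_neg: "\<theta> \<in> set xs \<Longrightarrow> tval v (dl xs A) \<Longrightarrow> \<theta> \<notin> A \<Longrightarrow> \<not> tval v \<theta>"
  using tval_dl by blast
lemma dl_mem: "\<theta> \<in> set xs \<Longrightarrow> tval v (dl xs A) \<Longrightarrow> tval v \<theta> \<Longrightarrow> \<theta> \<in> A"
  using tval_dl by blast

lemma funpow_nxt_Suc: "(Nxt ^^ Suc i) x = Nxt ((Nxt ^^ i) x)" by simp

lemma funpow_nxt_And: "(Nxt ^^ i) x = And a b \<Longrightarrow> i = 0" by (cases i) auto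
lemma funpow_nxt_Neg: "(Nxt ^^ i) x = Neg a \<Longrightarrow> i = 0" by (cases i) auto
lemma funpow_nxt_Box: "(Nxt ^^ i) x = Box a \<Longrightarrow> i = 0" by (cases i) auto

locale clos = fixes \<phi> :: "'p form"
begin

definition N :: nat where "N = nd \<phi>"

definition Cset :: "nat \<Rightarrow> 'p form set" where
  "Cset k = {x. \<exists>i c. x = (Nxt ^^ i) c \<and> i \<le> N - k \<and> c \<in> set (subl \<phi>)}"

definition cl :: "nat \<Rightarrow> 'p form list" where
  "cl k = remdups (concat (map (\<lambda>i. map (Nxt ^^ i) (subl \<phi>)) [0..<Suc (N - k)]))"

lemma set_cl: "set (cl k) = Cset k"
proof (rule set_eqI)
  fix x
  have "x \<in> set (cl k) \<longleftrightarrow> (\<exists>i\<in>set [0..<Suc (N - k)]. x \<in> (Nxt ^^ i) ` set (subl \<phi>))"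
    unfolding cl_def by auto
  also have "\<dots> \<longleftrightarrow> (\<exists>i. i \<le> N - k \<and> x \<in> (Nxt ^^ i) ` set (subl \<phi>))"
    by (metis atLeastLessThan_iff less_Suc_eq_le set_upt zero_le)
  also have "\<dots> \<longleftrightarrow> x \<in> Cset k" unfolding Cset_def by blast
  finally show "x \<in> set (cl k) \<longleftrightarrow> x \<in> Cset k" .
qed

lemma distinct_cl: "distinct (cl k)" by (simp add: cl_def)

lemma finite_Cset: "finite (Cset k)" by (metis set_cl List.finite_set)

lemma Cset_sub0: "Cset k \<subseteq> Cset 0" unfolding Cset_def by force

lemma phi_Cset: "\<phi> \<in> Cset 0"
  unfolding Cset_def by (rule CollectI, rule exI[of _ 0], rule exI[of _ \<phi>]) (simp add: subl_self)

lemma Cset_And: "And a b \<in> Cset k \<Longrightarrow> a \<in> Cset k \<and> b \<in> Cset k"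
proof -
  assume "And a b \<in> Cset k"
  then obtain i c where h: "And a b = (Nxt ^^ i) c" "i \<le> N - k" "c \<in> set (subl \<phi>)" unfolding Cset_def by blast
  then have "i = 0" using funpow_nxt_And by metis
  with h have "And a b \<in> set (subl \<phi>)" by simp
  then have "a \<in> set (subl \<phi>)" "b \<in> set (subl \<phi>)" using subl_trans[OF \<open>And a b \<in> set (subl \<phi>)\<close>] by (auto simp: subl_self)
  then show ?thesis unfolding Cset_def by (metis (mono_tags, lifting) CollectI funpow_0 zero_le)
qed

lemma Cset_Neg: "Neg a \<in> Cset k \<Longrightarrow> a \<in> Cset k"
proof -
  assume "Neg a \<in> Cset k"
  then obtain i c where h: "Neg a = (Nxt ^^ i) c" "i \<le> N - k" "c \<in> set (subl \<phi>)" unfolding Cset_def by blast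
  then have "i = 0" using funpow_nxt_Neg by metis
  with h have "Neg a \<in> set (subl \<phi>)" by simp
  then have "a \<in> set (subl \<phi>)" using subl_trans[OF \<open>Neg a \<in> set (subl \<phi>)\<close>] by (auto simp: subl_self)
  then show ?thesis unfolding Cset_def by (metis (mono_tags, lifting) CollectI funpow_0 zero_le)
qed

lemma Cset_Box: "Box a \<in> Cset k \<Longrightarrow> a \<in> Cset k"
proof -
  assume "Box a \<in> Cset k"
  then obtain i c where h: "Box a = (Nxt ^^ i) c" "i \<le> N - k" "c \<in> set (subl \<phi>)" unfolding Cset_def by blast
  then have "i = 0" using funpow_nxt_Box by metis
  with h have "Box a \<in> set (subl \<phi>)" by simp
  then have "a \<in> set (subl \<phi>)" using subl_trans[OF \<open>Box a \<in> set (subl \<phi>)\<close>] by (auto simp: subl_self)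
  then show ?thesis unfolding Cset_def by (metis (mono_tags, lifting) CollectI funpow_0 zero_le)
qed

lemma Cset_Nxt: "k < N \<Longrightarrow> Nxt \<theta> \<in> Cset k \<longleftrightarrow> \<theta> \<in> Cset (Suc k)"
proof
  assume k: "k < N" and "Nxt \<theta> \<in> Cset k"
  then obtain i c where h: "Nxt \<theta> = (Nxt ^^ i) c" "i \<le> N - k" "c \<in> set (subl \<phi>)" unfolding Cset_def by blast
  show "\<theta> \<in> Cset (Suc k)"
  proof (cases i)
    case 0
    with h have "Nxt \<theta> \<in> set (subl \<phi>)" by simp
    then have "\<theta> \<in> set (subl \<phi>)" using subl_trans[OF \<open>Nxt \<theta> \<in> set (subl \<phi>)\<close>] by (auto simp: subl_self)
    then show ?thesis unfolding Cset_def by (metis (mono_tags, lifting) CollectI funpow_0 zero_le)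
  next
    case (Suc j)
    with h have "\<theta> = (Nxt ^^ j) c" "j \<le> N - Suc k" by auto
    then show ?thesis using h(3) unfolding Cset_def by blast
  qed
next
  assume k: "k < N" and "\<theta> \<in> Cset (Suc k)"
  then obtain i c where h: "\<theta> = (Nxt ^^ i) c" "i \<le> N - Suc k" "c \<in> set (subl \<phi>)" unfolding Cset_def by blast
  then have "Nxt \<theta> = (Nxt ^^ Suc i) c" "Suc i \<le> N - k" using k by auto
  then show "Nxt \<theta> \<in> Cset k" using h(3) unfolding Cset_def by blast
qed

definition atom :: "nat \<Rightarrow> 'p form set \<Rightarrow> bool" where
  "atom k A \<longleftrightarrow> A \<subseteq> Cset k \<and> cons (dl (cl k) A)"

definition step :: "nat \<Rightarrow> 'p form set \<Rightarrow> 'p form set \<Rightarrow> bool" where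
  "step k A B \<longleftrightarrow> cons (And (dl (cl k) A) (Dia (dl (cl k) B)))"

lemma atom_tv: "atom k A \<Longrightarrow> \<exists>v. \<forall>\<theta>\<in>Cset k. tval v \<theta> \<longleftrightarrow> \<theta> \<in> A"
  unfolding atom_def using cons_tval tval_dl set_cl by metis

lemma atom_And: "atom k A \<Longrightarrow> And a b \<in> Cset k \<Longrightarrow> And a b \<in> A \<longleftrightarrow> a \<in> A \<and> b \<in> A"
proof -
  assume "atom k A" "And a b \<in> Cset k"
  moreover obtain v where "\<forall>\<theta>\<in>Cset k. tval v \<theta> \<longleftrightarrow> \<theta> \<in> A" using atom_tv[OF \<open>atom k A\<close>] by blast
  ultimately show ?thesis using Cset_And[of a b k] tval.simps(2)[of v a b] by blast
qed

lemma atom_Neg: "atom k A \<Longrightarrow> Neg a \<in> Cset k \<Longrightarrow> Neg a \<in> A \<longleftrightarrow> a \<notin> A"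
proof -
  assume "atom k A" "Neg a \<in> Cset k"
  moreover obtain v where "\<forall>\<theta>\<in>Cset k. tval v \<theta> \<longleftrightarrow> \<theta> \<in> A" using atom_tv[OF \<open>atom k A\<close>] by blast
  ultimately show ?thesis using Cset_Neg[of a k] tval.simps(3)[of v a] by blast
qed

lemma step_box: assumes "atom k A" "step k A B" "Box \<psi> \<in> A"
  shows "\<psi> \<in> B \<and> Box \<psi> \<in> B"
proof -
  have c: "Box \<psi> \<in> Cset k" "\<psi> \<in> Cset k" using assms(1,3) Cset_Box unfolding atom_def by auto
  have 1: "GLC (Imp (dl (cl k) A) (Box \<psi>))"
  proof (rule taut_GLC)
    fix v show "tval v (Imp (dl (cl k) A) (Box \<psi>))"
      using dl_pos[of "Box \<psi>" "cl k" v A] c assms(3) by (simp add: set_cl)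
  qed
  have 2: "GLC (Imp (Box \<psi>) (Box (Box \<psi>)))" by (rule GLC.Four)
  have 3: "GLC (Imp (And (Box \<psi>) (Box (Box \<psi>))) (Box (And \<psi> (Box \<psi>))))" by (rule box_and)
  have "GLC (Imp (dl (cl k) A) (Box (And \<psi> (Box \<psi>))))" by (rule pmp3[OF 1 2 3]) auto
  from dia_L3g[OF assms(2)[unfolded step_def] this] obtain v where
    "tval v (dl (cl k) B)" "tval v \<psi>" "tval v (Box \<psi>)" using cons_tval[of "And (dl (cl k) B) (And \<psi> (Box \<psi>))"] by auto
  then show ?thesis using c dl_mem[of \<psi> "cl k" v B] dl_mem[of "Box \<psi>" "cl k" v B] by (simp add: set_cl)
qed

lemma witness: assumes "atom k A" "Box \<psi> \<in> Cset k" "Box \<psi> \<notin> A"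
  shows "\<exists>B. atom k B \<and> step k A B \<and> \<psi> \<notin> B \<and> Box \<psi> \<in> B"
proof -
  have c: "\<psi> \<in> Cset k" using assms(2) Cset_Box by auto
  have cA: "cons (dl (cl k) A)" using assms(1) atom_def by auto
  have 1: "GLC (Imp (dl (cl k) A) (Neg (Box \<psi>)))"
  proof (rule taut_GLC)
    fix v show "tval v (Imp (dl (cl k) A) (Neg (Box \<psi>)))"
      using dl_neg[of "Box \<psi>" "cl k" v A] assms(2,3) by (simp add: set_cl)
  qed
  have 2: "GLC (Imp (Box (Imp (Box \<psi>) \<psi>)) (Box \<psi>))" by (rule GLC.L)
  have "GLC (Imp (dl (cl k) A) (And (dl (cl k) A) (Dia (And (Box \<psi>) (Neg \<psi>)))))"
    by (rule pmp2[OF 1 2]) (auto simp: Dia_def Imp_def)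
  from cons_mono[OF this cA] have s: "cons (And (dl (cl k) A) (Dia (And (Box \<psi>) (Neg \<psi>))))" .
  obtain B where B: "B \<subseteq> set (cl k)" "cons (And (dl (cl k) A) (Dia (And (And (Box \<psi>) (Neg \<psi>)) (dl (cl k) B))))"
  proof -
    let ?P = "\<lambda>Y. cons (And (dl (cl k) A) (Dia Y))"
    have sp: "\<And>a \<theta>. ?P a \<Longrightarrow> ?P (And a \<theta>) \<or> ?P (And a (Neg \<theta>))" by (rule dia_split)
    have mn: "\<And>a b. GLC (Imp a b) \<Longrightarrow> ?P a \<Longrightarrow> ?P b" by (rule dia_mono)
    have "\<exists>B \<subseteq> set (cl k). ?P (And (And (Box \<psi>) (Neg \<psi>)) (dl (cl k) B))"
      by (rule lindenbaum[where P = ?P, OF sp mn distinct_cl s])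
    then show ?thesis using that by blast
  qed
  have st: "step k A B" unfolding step_def
    by (rule dia_mono[OF _ B(2)], rule taut_GLC) simp
  obtain v where v: "tval v (And (And (Box \<psi>) (Neg \<psi>)) (dl (cl k) B))"
    using dia_cons[OF B(2)] cons_tval by blast
  have "cons (dl (cl k) B)" using dia_cons[OF B(2)] by (rule cons_mono[rotated]) (rule taut_GLC, simp)
  then have "atom k B" using B(1) by (simp add: atom_def set_cl)
  moreover have "\<psi> \<notin> B" "Box \<psi> \<in> B" using v c assms(2) dl_pos[of \<psi> "cl k" v B] dl_mem[of "Box \<psi>" "cl k" v B] by (auto simp: set_cl)
  ultimately show ?thesis using st by blast
qed

lemma root: assumes "\<not> GLC \<phi>" shows "\<exists>A. atom 0 A \<and> \<phi> \<notin> A"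
proof -
  have "cons (Neg \<phi>)" unfolding cons_def
  proof
    assume "GLC (Neg (Neg \<phi>))" then have "GLC \<phi>" by (rule pmp) simp
    then show False using assms by simp
  qed
  then obtain A where A: "A \<subseteq> set (cl 0)" "cons (And (Neg \<phi>) (dl (cl 0) A))"
  proof -
    have sp: "\<And>a \<theta>. cons a \<Longrightarrow> cons (And a \<theta>) \<or> cons (And a (Neg \<theta>))" by (rule cons_split)
    have mn: "\<And>a b. GLC (Imp a b) \<Longrightarrow> cons a \<Longrightarrow> cons b" by (rule cons_mono)
    have "\<exists>A \<subseteq> set (cl 0). cons (And (Neg \<phi>) (dl (cl 0) A))"
      by (rule lindenbaum[where P = cons, OF sp mn distinct_cl \<open>cons (Neg \<phi>)\<close>])
    then show ?thesis using that by blast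
  qed
  have "cons (dl (cl 0) A)" using A(2) by (rule cons_mono[rotated]) (rule taut_GLC, simp)
  moreover obtain v where "tval v (And (Neg \<phi>) (dl (cl 0) A))" using A(2) cons_tval by blast
  then have "\<phi> \<notin> A" using phi_Cset dl_pos[of \<phi> "cl 0" v A] by (auto simp: set_cl)
  ultimately show ?thesis using A(1) by (auto simp: atom_def set_cl)
qed

end


lemma nxt_conj: "GLC (Imp (conj (map (\<lambda>\<theta>. if \<theta> \<in> P then Nxt \<theta> else Neg (Nxt \<theta>)) xs)) (Nxt (dl xs P)))"
proof (induction xs)
  case Nil
  have "GLC (Nxt Top)" by (rule GLC.Nec_next, rule taut_GLC) simp
  then show ?case by (rule pmp) (simp add: dl_def)
next
  case (Cons \<theta> xs)
  have h1: "GLC (Imp (if \<theta> \<in> P then Nxt \<theta> else Neg (Nxt \<theta>)) (Nxt (lit P \<theta>)))"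
  proof (cases "\<theta> \<in> P")
    case True then show ?thesis by (simp add: lit_def) (rule taut_GLC, simp)
  next
    case False then show ?thesis using nxt_neg2[of \<theta>] by (simp add: lit_def)
  qed
  have h2: "GLC (Imp (And (Nxt (lit P \<theta>)) (Nxt (dl xs P))) (Nxt (And (lit P \<theta>) (dl xs P))))" by (rule nxt_and1)
  have e: "dl (\<theta> # xs) P = And (lit P \<theta>) (dl xs P)" by (simp add: dl_def)
  show ?case unfolding e by (rule pmp3[OF Cons.IH h1 h2]) auto
qed

lemma remdups_map_succ:
  "successively R xs \<Longrightarrow> (\<forall>x\<in>set xs. \<forall>y\<in>set xs. R x y \<longrightarrow> g x = g y \<or> R' (g x) (g y))
   \<Longrightarrow> successively R' (remdups_adj (map g xs))"
proof (induction xs)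
  case Nil then show ?case by simp
next
  case (Cons x xs)
  show ?case
  proof (cases xs)
    case Nil then show ?thesis by simp
  next
    case (Cons y ys)
    have IH: "successively R' (remdups_adj (g y # map g ys))"
      using Cons.IH Cons.prems \<open>xs = y # ys\<close> by auto
    have Rxy: "R x y" using Cons.prems \<open>xs = y # ys\<close> by auto
    show ?thesis
    proof (cases "g x = g y")
      case True then show ?thesis using IH \<open>xs = y # ys\<close> by simp
    next
      case False
      then have "R' (g x) (g y)" using Rxy Cons.prems \<open>xs = y # ys\<close> by auto
      then show ?thesis using IH \<open>xs = y # ys\<close> False
        by (simp add: successively_Cons)
    qed
  qed
qed

lemma remdups_adj_prefix: "\<exists>zs. remdups_adj (xs @ ys) = remdups_adj xs @ zs"
proof (cases "xs = [] \<or> ys = []")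
  case True then show ?thesis by auto
next
  case False
  then obtain xs1 x where xs: "xs = xs1 @ [x]" by (metis rev_exhaust)
  then have "remdups_adj (xs @ ys) = remdups_adj (xs1 @ x # ys)" by simp
  also have "\<dots> = remdups_adj xs @ tl (remdups_adj (x # ys))" using xs remdups_adj_append by metis
  finally show ?thesis by blast
qed

context clos begin

definition prof :: "nat \<Rightarrow> 'p form set \<Rightarrow> 'p form set" where
  "prof k A = {\<theta> \<in> Cset (Suc k). Nxt \<theta> \<in> A}"

lemma prof_N2: assumes "k < N"
  shows "GLC (Imp (dl (cl k) A) (Nxt (dl (cl (Suc k)) (prof k A))))"
proof -
  have "GLC (Imp (dl (cl k) A) (conj (map (\<lambda>\<theta>. if \<theta> \<in> prof k A then Nxt \<theta> else Neg (Nxt \<theta>)) (cl (Suc k)))))"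
  proof (rule taut_GLC)
    fix v
    show "tval v (Imp (dl (cl k) A) (conj (map (\<lambda>\<theta>. if \<theta> \<in> prof k A then Nxt \<theta> else Neg (Nxt \<theta>)) (cl (Suc k)))))"
    proof (simp only: tval_Imp, intro impI)
      assume d: "tval v (dl (cl k) A)"
      have "\<forall>\<theta>\<in>set (cl (Suc k)). tval v (if \<theta> \<in> prof k A then Nxt \<theta> else Neg (Nxt \<theta>))"
      proof
        fix \<theta> assume "\<theta> \<in> set (cl (Suc k))"
        then have t: "Nxt \<theta> \<in> set (cl k)" "\<theta> \<in> Cset (Suc k)" using Cset_Nxt[OF assms] by (auto simp: set_cl)
        show "tval v (if \<theta> \<in> prof k A then Nxt \<theta> else Neg (Nxt \<theta>))"
          using dl_pos[OF t(1) d] dl_neg[OF t(1) d] t(2) by (auto simp: prof_def)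
      qed
      then show "tval v (conj (map (\<lambda>\<theta>. if \<theta> \<in> prof k A then Nxt \<theta> else Neg (Nxt \<theta>)) (cl (Suc k))))"
        unfolding tval_conj set_map by blast
    qed
  qed
  then show ?thesis by (rule pmp2[OF _ nxt_conj[of "prof k A" "cl (Suc k)"]]) (simp only: tval_Imp, blast)
qed

lemma prof_atom: assumes "atom k A" "k < N" shows "atom (Suc k) (prof k A)"
proof -
  have "cons (dl (cl (Suc k)) (prof k A))" unfolding cons_def
  proof
    assume "GLC (Neg (dl (cl (Suc k)) (prof k A)))"
    then have "GLC (Nxt (Neg (dl (cl (Suc k)) (prof k A))))" by (rule GLC.Nec_next)
    then have 1: "GLC (Neg (Nxt (dl (cl (Suc k)) (prof k A))))" using nxt_neg1 GLC.MP by blast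
    have "GLC (Neg (dl (cl k) A))" by (rule pmp2[OF 1 prof_N2[OF assms(2)]]) auto
    then show False using assms(1) by (simp add: atom_def cons_def)
  qed
  then show ?thesis by (auto simp: atom_def prof_def)
qed

lemma prof_step: assumes A: "atom k A" and B: "atom k B" and st: "step k A B" and k: "k < N"
  and ne: "prof k A \<noteq> prof k B"
  shows "step (Suc k) (prof k A) (prof k B)"
proof (rule ccontr)
  let ?a = "dl (cl (Suc k)) (prof k A)"
  let ?b = "dl (cl (Suc k)) (prof k B)"
  assume "\<not> step (Suc k) (prof k A) (prof k B)"
  then have n: "GLC (Neg (And ?a (Dia ?b)))" by (simp add: step_def cons_def)
  have sub: "prof k A \<subseteq> Cset (Suc k)" "prof k B \<subseteq> Cset (Suc k)" by (auto simp: prof_def)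
  obtain \<beta> where \<beta>: "\<beta> \<in> Cset (Suc k)" "\<beta> \<in> prof k A \<longleftrightarrow> \<beta> \<notin> prof k B"
    using ne sub by blast
  define \<beta>' where "\<beta>' = lit (prof k A) \<beta>"
  have h1: "GLC (Imp ?a \<beta>')"
  proof (rule taut_GLC)
    fix v show "tval v (Imp ?a \<beta>')"
      using dl_pos[of \<beta> "cl (Suc k)" v "prof k A"] dl_neg[of \<beta> "cl (Suc k)" v "prof k A"] \<beta>
      by (auto simp: \<beta>'_def set_cl)
  qed
  have h2: "GLC (Imp ?b (Neg \<beta>'))"
  proof (rule taut_GLC)
    fix v show "tval v (Imp ?b (Neg \<beta>'))"
      using dl_pos[of \<beta> "cl (Suc k)" v "prof k B"] dl_neg[of \<beta> "cl (Suc k)" v "prof k B"] \<beta>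
      by (auto simp: \<beta>'_def set_cl)
  qed
  define \<phi>0 where "\<phi>0 = Neg (And (Neg \<beta>') (Neg (Neg ?b)))"
  have g1: "GLC (Imp ?a (Box (Neg ?b)))" by (rule pmp[OF n]) (auto simp: Dia_def)
  have "GLC (Imp ?a \<phi>0)" by (rule pmp[OF h1]) (auto simp: \<phi>0_def)
  then have g2: "GLC (Imp (Nxt ?a) (Nxt \<phi>0))" by (rule nxt_mono)
  have "GLC (Imp (Neg ?b) \<phi>0)" by (rule taut_GLC) (auto simp: \<phi>0_def)
  then have g3: "GLC (Imp (Nxt (Box (Neg ?b))) (Nxt (Box \<phi>0)))" by (intro nxt_mono box_mono)
  have g4: "GLC (Imp (Nxt ?a) (Nxt (Box (Neg ?b))))" by (rule nxt_mono[OF g1])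
  have g5: "GLC (Imp (Nxt ?a) (And (Nxt \<phi>0) (Nxt (Box \<phi>0))))" by (rule pmp3[OF g2 g3 g4]) auto
  have C: "GLC (Imp (And (Nxt \<phi>0) (Nxt (Box \<phi>0))) (Box (Nxt \<phi>0)))" by (rule GLC.C)
  have "GLC (Imp (dl (cl k) A) (Box (Nxt \<phi>0)))" by (rule pmp3[OF prof_N2[OF k] g5 C]) auto
  from dia_L3g[OF st[unfolded step_def] this] have c: "cons (And (dl (cl k) B) (Nxt \<phi>0))" .
  have "GLC (Imp ?b (Neg \<phi>0))" by (rule pmp[OF h2]) (auto simp: \<phi>0_def)
  then have g6: "GLC (Imp (Nxt ?b) (Nxt (Neg \<phi>0)))" by (rule nxt_mono)
  have "GLC (Neg (And (dl (cl k) B) (Nxt \<phi>0)))"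
    by (rule pmp3[OF prof_N2[OF k, of B] g6 nxt_neg1[of \<phi>0]]) auto
  then show False using c by (simp add: cons_def)
qed

definition chain :: "nat \<Rightarrow> 'p form set list \<Rightarrow> bool" where
  "chain k s \<longleftrightarrow> s \<noteq> [] \<and> (\<forall>A\<in>set s. atom k A) \<and> successively (step k) s"

lemma chain_prop: "successively (step k) (A # xs) \<Longrightarrow> (\<forall>B\<in>set (A # xs). atom k B) \<Longrightarrow> Box \<psi> \<in> A
  \<Longrightarrow> B \<in> set xs \<Longrightarrow> \<psi> \<in> B \<and> Box \<psi> \<in> B"
proof (induction xs arbitrary: A)
  case Nil then show ?case by simp
next
  case (Cons C xs)
  have sC: "step k A C" using Cons.prems(1) by simp
  have aA: "atom k A" using Cons.prems(2) by simp
  have bC: "\<psi> \<in> C \<and> Box \<psi> \<in> C" by (rule step_box[OF aA sC Cons.prems(3)])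
  show ?case
  proof (cases "B = C")
    case True then show ?thesis using bC by simp
  next
    case False
    then have "B \<in> set xs" using Cons.prems by simp
    moreover have "successively (step k) (C # xs)" using Cons.prems(1) by simp
    moreover have "\<forall>B\<in>set (C # xs). atom k B" using Cons.prems(2) by simp
    ultimately show ?thesis using Cons.IH[of C] bC by blast
  qed
qed

end


definition kframe :: "'w set \<Rightarrow> ('w \<Rightarrow> 'w \<Rightarrow> bool) \<Rightarrow> ('w \<Rightarrow> 'w) \<Rightarrow> bool" where
  "kframe W R f \<longleftrightarrow> finite W \<and> (\<forall>x y. R x y \<longrightarrow> x \<in> W \<and> y \<in> W) \<and> (\<forall>x. \<not> R x x)
     \<and> (\<forall>x y z. R x y \<longrightarrow> R y z \<longrightarrow> R x z) \<and> (\<forall>x\<in>W. f x \<in> W)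
     \<and> (\<forall>x y. R x y \<longrightarrow> f x = f y \<or> R (f x) (f y))"

fun ks :: "'w set \<Rightarrow> ('w \<Rightarrow> 'w \<Rightarrow> bool) \<Rightarrow> ('w \<Rightarrow> 'w) \<Rightarrow> ('p \<Rightarrow> 'w set) \<Rightarrow> 'p form \<Rightarrow> 'w set" where
  "ks W R f V (Var p) = V p"
| "ks W R f V (And a b) = ks W R f V a \<inter> ks W R f V b"
| "ks W R f V (Neg a) = W - ks W R f V a"
| "ks W R f V (Box a) = {x \<in> W. \<forall>y. R x y \<longrightarrow> y \<in> ks W R f V a}"
| "ks W R f V (Nxt a) = {x \<in> W. f x \<in> ks W R f V a}"

lemma ks_sub: "(\<forall>p. V p \<subseteq> W) \<Longrightarrow> ks W R f V \<theta> \<subseteq> W"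
  by (induction \<theta>) auto

lemma kframe_max: assumes "kframe W R f" "Q \<subseteq> W" "Q \<noteq> {}"
  shows "\<exists>z\<in>Q. \<forall>y\<in>Q. \<not> R z y"
proof -
  let ?r = "{(y, z). R z y}"
  have fin: "finite ?r"
  proof (rule finite_subset)
    show "?r \<subseteq> W \<times> W" using assms(1) by (auto simp: kframe_def)
    show "finite (W \<times> W)" using assms(1) by (simp add: kframe_def)
  qed
  have tr: "trans ?r" using assms(1) unfolding kframe_def trans_def by blast
  have "acyclic ?r" unfolding acyclic_def using trancl_id[OF tr] assms(1) by (auto simp: kframe_def)
  then have "wf ?r" using finite_acyclic_wf fin by blast
  then obtain z where "z \<in> Q" "\<forall>y. (y, z) \<in> ?r \<longrightarrow> y \<notin> Q"
    using assms(3) unfolding wf_eq_minimal by blast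
  then show ?thesis by auto
qed

lemma tval_ks: "x \<in> W \<Longrightarrow> tval (\<lambda>\<psi>. x \<in> ks W R f V \<psi>) \<theta> \<longleftrightarrow> x \<in> ks W R f V \<theta>"
  by (induction \<theta>) auto

lemma ks_Imp: "x \<in> W \<Longrightarrow> x \<in> ks W R f V (Imp a b) \<longleftrightarrow> (x \<in> ks W R f V a \<longrightarrow> x \<in> ks W R f V b)"
  by (auto simp: Imp_def)

lemma ks_Iff: "x \<in> W \<Longrightarrow> x \<in> ks W R f V (Iff a b) \<longleftrightarrow> (x \<in> ks W R f V a \<longleftrightarrow> x \<in> ks W R f V b)"
  by (auto simp: Iff_def Imp_def)

lemma ksound: assumes fr: "kframe W R f" and V: "\<forall>p. V p \<subseteq> W"
  shows "GLC \<theta> \<Longrightarrow> ks W R f V \<theta> = W"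
proof (induction rule: GLC.induct)
  note sub = ks_sub[OF V, of R f]
  have RW: "\<And>x y. R x y \<Longrightarrow> x \<in> W \<and> y \<in> W" using fr by (simp add: kframe_def)
  have tr: "\<And>x y z. R x y \<Longrightarrow> R y z \<Longrightarrow> R x z" using fr by (simp add: kframe_def)
  have fW: "\<And>x. x \<in> W \<Longrightarrow> f x \<in> W" using fr by (simp add: kframe_def)
  have mo: "\<And>x y. R x y \<Longrightarrow> f x = f y \<or> R (f x) (f y)" using fr by (simp add: kframe_def)
  have eqI: "\<And>\<theta>. (\<And>x. x \<in> W \<Longrightarrow> x \<in> ks W R f V \<theta>) \<Longrightarrow> ks W R f V \<theta> = W" using sub by blast
  {
    case (Taut \<phi>)
    show ?case
    proof (rule eqI)
      fix x assume "x \<in> W"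
      have "tval (\<lambda>\<psi>. x \<in> ks W R f V \<psi>) \<phi>" using Taut by (simp add: taut_def)
      then show "x \<in> ks W R f V \<phi>" using tval_ks[OF \<open>x \<in> W\<close>] by blast
    qed
  next
    case (K \<phi> \<psi>)
    show ?case by (rule eqI) (use RW in \<open>auto simp: ks_Imp\<close>)
  next
    case (Four \<phi>)
    show ?case by (rule eqI) (use tr RW in \<open>auto simp: ks_Imp\<close>)
  next
    case (L \<phi>)
    show ?case
    proof (rule eqI)
      fix x assume x: "x \<in> W"
      show "x \<in> ks W R f V (Imp (Box (Imp (Box \<phi>) \<phi>)) (Box \<phi>))"
      proof (simp only: ks_Imp[OF x], rule impI, rule ccontr)
        assume h: "x \<in> ks W R f V (Box (Imp (Box \<phi>) \<phi>))" and n: "x \<notin> ks W R f V (Box \<phi>)"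
        let ?Q = "{y. R x y \<and> y \<notin> ks W R f V \<phi>}"
        have "?Q \<noteq> {}" using n x by auto
        moreover have "?Q \<subseteq> W" using RW by auto
        ultimately have "\<exists>z\<in>?Q. \<forall>y\<in>?Q. \<not> R z y" by (rule kframe_max[OF fr, rotated])
        then obtain z where z: "z \<in> ?Q" "\<forall>y\<in>?Q. \<not> R z y" by blast
        have zW: "z \<in> W" using z(1) RW by auto
        have "z \<in> ks W R f V (Box \<phi>)" using z tr zW by auto
        moreover have "z \<in> ks W R f V (Imp (Box \<phi>) \<phi>)" using h z(1) by auto
        moreover have "z \<in> ks W R f V (Imp (Box \<phi>) \<phi>) \<longleftrightarrow> (z \<in> ks W R f V (Box \<phi>) \<longrightarrow> z \<in> ks W R f V \<phi>)"
          by (rule ks_Imp[OF zW])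
        ultimately show False using z(1) by blast
      qed
    qed
  next
    case (Next_neg \<phi>)
    show ?case by (rule eqI) (use fW sub in \<open>auto simp: ks_Iff\<close>)
  next
    case (Next_and \<phi> \<psi>)
    show ?case by (rule eqI) (auto simp: ks_Iff)
  next
    case (C \<phi>)
    show ?case
    proof (rule eqI)
      fix x assume x: "x \<in> W"
      show "x \<in> ks W R f V (Imp (And (Nxt \<phi>) (Nxt (Box \<phi>))) (Box (Nxt \<phi>)))"
      proof (simp only: ks_Imp[OF x], intro impI)
        assume h: "x \<in> ks W R f V (And (Nxt \<phi>) (Nxt (Box \<phi>)))"
        have "f y \<in> ks W R f V \<phi>" if r: "R x y" for y
        proof -
          have hh: "f x \<in> ks W R f V \<phi>" "\<forall>z. R (f x) z \<longrightarrow> z \<in> ks W R f V \<phi>" using h by auto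
          from mo[OF r] show ?thesis using hh by metis
        qed
        then show "x \<in> ks W R f V (Box (Nxt \<phi>))" using RW x by auto
      qed
    qed
  next
    case (MP \<phi> \<psi>)
    show ?case
    proof (rule eqI)
      fix x assume x: "x \<in> W"
      have "x \<in> ks W R f V (Imp \<phi> \<psi>) \<longleftrightarrow> (x \<in> ks W R f V \<phi> \<longrightarrow> x \<in> ks W R f V \<psi>)"
        by (rule ks_Imp[OF x])
      then show "x \<in> ks W R f V \<psi>" using MP.IH x by blast
    qed
  next
    case (Nec_box \<phi>)
    show ?case by (rule eqI) (use Nec_box.IH RW in auto)
  next
    case (Nec_next \<phi>)
    show ?case by (rule eqI) (use Nec_next.IH fW in auto)
  }
qed

lemma transport:
  assumes fr: "kframe W R f" and inj: "inj_on g W" and V: "\<forall>p. V p \<subseteq> W"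
  defines "h \<equiv> inv_into W g"
  defines "R' \<equiv> \<lambda>a b. a \<in> g ` W \<and> b \<in> g ` W \<and> R (h a) (h b)"
  defines "f' \<equiv> \<lambda>a. g (f (h a))"
  defines "V' \<equiv> \<lambda>p. g ` V p"
  shows "kframe (g ` W) R' f'" and "x \<in> W \<Longrightarrow> g x \<in> ks (g ` W) R' f' V' \<theta> \<longleftrightarrow> x \<in> ks W R f V \<theta>"
proof -
  have hg: "\<And>x. x \<in> W \<Longrightarrow> h (g x) = x" using inj by (simp add: h_def)
  have RW: "\<And>x y. R x y \<Longrightarrow> x \<in> W \<and> y \<in> W" using fr by (simp add: kframe_def)
  have fW: "\<And>x. x \<in> W \<Longrightarrow> f x \<in> W" using fr by (simp add: kframe_def)
  have R'g: "\<And>x y. x \<in> W \<Longrightarrow> y \<in> W \<Longrightarrow> R' (g x) (g y) \<longleftrightarrow> R x y" using hg by (auto simp: R'_def)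
  show "kframe (g ` W) R' f'"
    unfolding kframe_def
  proof (intro conjI allI impI ballI)
    show "finite (g ` W)" using fr by (simp add: kframe_def)
  next
    fix x y assume "R' x y" then show "x \<in> g ` W" "y \<in> g ` W" by (auto simp: R'_def)
  next
    fix x show "\<not> R' x x" using fr by (auto simp: R'_def kframe_def)
  next
    fix x y z assume "R' x y" "R' y z" then show "R' x z" using fr by (auto simp: R'_def kframe_def)
  next
    fix x assume "x \<in> g ` W" then show "f' x \<in> g ` W" using hg fW by (auto simp: f'_def)
  next
    fix x y assume r: "R' x y"
    then obtain a b where ab: "x = g a" "y = g b" "a \<in> W" "b \<in> W" "R a b" using hg by (auto simp: R'_def)
    then have "f a = f b \<or> R (f a) (f b)" using fr by (simp add: kframe_def)
    then show "f' x = f' y \<or> R' (f' x) (f' y)" using ab hg fW R'g by (auto simp: f'_def)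
  qed
  show "x \<in> W \<Longrightarrow> g x \<in> ks (g ` W) R' f' V' \<theta> \<longleftrightarrow> x \<in> ks W R f V \<theta>"
  proof (induction \<theta> arbitrary: x)
    case (Var p)
    then show ?case using inj V by (auto simp: V'_def inj_on_image_mem_iff)
  next
    case (And a b) then show ?case by simp
  next
    case (Neg a) then show ?case by simp
  next
    case (Box a)
    have "g x \<in> ks (g ` W) R' f' V' (Box a) \<longleftrightarrow> (\<forall>b. R' (g x) b \<longrightarrow> b \<in> ks (g ` W) R' f' V' a)"
      using Box.prems by simp
    also have "\<dots> \<longleftrightarrow> (\<forall>y. R x y \<longrightarrow> g y \<in> ks (g ` W) R' f' V' a)"
      using R'g Box.prems RW by (auto simp: R'_def)
    also have "\<dots> \<longleftrightarrow> (\<forall>y. R x y \<longrightarrow> y \<in> ks W R f V a)" using Box.IH RW by blast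
    finally show ?case using Box.prems by simp
  next
    case (Nxt a)
    have "f' (g x) = g (f x)" using Nxt.prems hg by (simp add: f'_def)
    then show ?case using Nxt.IH[of "f x"] Nxt.prems fW by simp
  qed
qed



context clos begin

definition bx :: "'p form set \<Rightarrow> nat" where "bx A = card {\<theta> \<in> A. \<exists>\<psi>. \<theta> = Box \<psi>}"
definition M :: nat where "M = card (Cset 0)"
definition pot :: "'p form set list \<Rightarrow> nat" where "pot s = length s + M - bx (last s)"
definition L :: "nat \<Rightarrow> nat" where "L k = Suc k * Suc M"
definition Wk :: "nat \<Rightarrow> 'p form set list set" where "Wk k = {s. chain k s \<and> pot s \<le> L k}"
definition Wm :: "(nat \<times> 'p form set list) set" where "Wm = {(k, s). k \<le> N \<and> s \<in> Wk k}"
definition Rm :: "(nat \<times> 'p form set list) \<Rightarrow> (nat \<times> 'p form set list) \<Rightarrow> bool" where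
  "Rm x y \<longleftrightarrow> x \<in> Wm \<and> y \<in> Wm \<and> fst x = fst y \<and> (\<exists>u. u \<noteq> [] \<and> snd y = snd x @ u)"
definition fm :: "(nat \<times> 'p form set list) \<Rightarrow> (nat \<times> 'p form set list)" where
  "fm x = (if fst x < N then (Suc (fst x), remdups_adj (map (prof (fst x)) (snd x))) else x)"
definition Vm :: "'p \<Rightarrow> (nat \<times> 'p form set list) set" where
  "Vm p = {x \<in> Wm. Var p \<in> last (snd x)}"

lemma atom_sub0: "atom k A \<Longrightarrow> A \<subseteq> Cset 0"
  using Cset_sub0 by (auto simp: atom_def)

lemma bx_le: "A \<subseteq> Cset 0 \<Longrightarrow> bx A \<le> M"
  unfolding bx_def M_def by (rule card_mono[OF finite_Cset]) auto

lemma chain_last: "chain k s \<Longrightarrow> atom k (last s)"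
  unfolding chain_def by auto

lemma pot_len: "chain k s \<Longrightarrow> length s \<le> pot s"
  using bx_le[OF atom_sub0[OF chain_last]] unfolding pot_def by fastforce

lemma L_mono: "k \<le> k' \<Longrightarrow> L k \<le> L k'"
  unfolding L_def by (intro mult_le_mono1) simp

lemma Wm_finite: "finite Wm"
proof (rule finite_subset)
  show "Wm \<subseteq> {..N} \<times> {s. set s \<subseteq> Pow (Cset 0) \<and> length s \<le> L N}"
  proof
    fix x assume "x \<in> Wm"
    then obtain k s where x: "x = (k, s)" "k \<le> N" "chain k s" "pot s \<le> L k" by (auto simp: Wm_def Wk_def)
    have "set s \<subseteq> Pow (Cset 0)" using x(3) atom_sub0 by (auto simp: chain_def)
    moreover have "length s \<le> L N" using pot_len[OF x(3)] x(4) L_mono[OF x(2)] by simp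
    ultimately show "x \<in> {..N} \<times> {s. set s \<subseteq> Pow (Cset 0) \<and> length s \<le> L N}" using x by auto
  qed
  show "finite ({..N} \<times> {s. set s \<subseteq> Pow (Cset 0) \<and> length s \<le> L N})"
    using finite_lists_length_le[of "Pow (Cset 0)" "L N"] finite_Cset by auto
qed

lemma fm_chain: assumes "chain k s" "k < N"
  shows "chain (Suc k) (remdups_adj (map (prof k) s))"
proof -
  have at: "\<forall>A\<in>set s. atom k A" and sc: "successively (step k) s" and ne: "s \<noteq> []"
    using assms(1) by (auto simp: chain_def)
  have "successively (step (Suc k)) (remdups_adj (map (prof k) s))"
    by (rule remdups_map_succ[OF sc]) (use at prof_step[OF _ _ _ assms(2)] in blast)
  moreover have "\<forall>A\<in>set (remdups_adj (map (prof k) s)). atom (Suc k) A"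
    using at prof_atom[OF _ assms(2)] by auto
  ultimately show ?thesis using ne by (simp add: chain_def)
qed

lemma fm_W: assumes "x \<in> Wm" shows "fm x \<in> Wm"
proof (cases "fst x < N")
  case True
  obtain k s where x: "x = (k, s)" "k \<le> N" "chain k s" "pot s \<le> L k" using assms by (auto simp: Wm_def Wk_def)
  let ?s = "remdups_adj (map (prof k) s)"
  have k: "k < N" using True x by simp
  have c: "chain (Suc k) ?s" by (rule fm_chain[OF x(3) k])
  have "length ?s \<le> length s" using remdups_adj_length by (metis length_map)
  then have "length ?s \<le> L k" using pot_len[OF x(3)] x(4) by simp
  then have "pot ?s \<le> L (Suc k)" unfolding pot_def L_def by simp
  then show ?thesis using c k x by (simp add: fm_def Wm_def Wk_def)
next
  case False then show ?thesis using assms by (simp add: fm_def)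
qed

lemma kframe_m: "kframe Wm Rm fm"
  unfolding kframe_def
proof (intro conjI allI impI ballI)
  show "finite Wm" by (rule Wm_finite)
next
  fix x y assume "Rm x y" then show "x \<in> Wm" "y \<in> Wm" by (auto simp: Rm_def)
next
  fix x show "\<not> Rm x x" by (auto simp: Rm_def)
next
  fix x y z assume "Rm x y" "Rm y z" then show "Rm x z" unfolding Rm_def by force
next
  fix x assume "x \<in> Wm" then show "fm x \<in> Wm" by (rule fm_W)
next
  fix x y assume r: "Rm x y"
  then obtain u where u: "x \<in> Wm" "y \<in> Wm" "fst x = fst y" "u \<noteq> []" "snd y = snd x @ u" by (auto simp: Rm_def)
  show "fm x = fm y \<or> Rm (fm x) (fm y)"
  proof (cases "fst x < N")
    case True
    obtain zs where zs: "remdups_adj (map (prof (fst x)) (snd x) @ map (prof (fst x)) u)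
       = remdups_adj (map (prof (fst x)) (snd x)) @ zs" using remdups_adj_prefix by blast
    have e: "fm y = (Suc (fst x), remdups_adj (map (prof (fst x)) (snd x)) @ zs)"
      using True u zs by (simp add: fm_def)
    show ?thesis
    proof (cases "zs = []")
      case True then show ?thesis using e \<open>fst x < N\<close> by (simp add: fm_def)
    next
      case False
      have ex: "fm x = (Suc (fst x), remdups_adj (map (prof (fst x)) (snd x)))" using \<open>fst x < N\<close> by (simp add: fm_def)
      show ?thesis unfolding Rm_def using fm_W[OF u(1)] fm_W[OF u(2)] ex e False by auto
    qed
  next
    case False then show ?thesis using r u by (simp add: fm_def)
  qed
qed

lemma Wm_chain: "(k, s) \<in> Wm \<Longrightarrow> chain k s" by (simp add: Wm_def Wk_def)

lemma truth: "(k, s) \<in> Wm \<Longrightarrow> \<theta> \<in> Cset k \<Longrightarrow> nd \<theta> \<le> N - k \<Longrightarrow>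
  ((k, s) \<in> ks Wm Rm fm Vm \<theta> \<longleftrightarrow> \<theta> \<in> last s)"
proof (induction \<theta> arbitrary: k s)
  case (Var p) then show ?case by (simp add: Vm_def)
next
  case (And a b)
  have at: "atom k (last s)" using chain_last[OF Wm_chain[OF And.prems(1)]] .
  show ?case using And.IH[OF And.prems(1)] And.prems Cset_And[OF And.prems(2)] atom_And[OF at And.prems(2)]
    by auto
next
  case (Neg a)
  have at: "atom k (last s)" using chain_last[OF Wm_chain[OF Neg.prems(1)]] .
  show ?case using Neg.IH[OF Neg.prems(1)] Neg.prems Cset_Neg[OF Neg.prems(2)] atom_Neg[OF at Neg.prems(2)]
    by auto
next
  case (Box a)
  have ch: "chain k s" using Wm_chain[OF Box.prems(1)] .
  have at: "atom k (last s)" using chain_last[OF ch] .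
  have aC: "a \<in> Cset k" using Cset_Box[OF Box.prems(2)] .
  have nda: "nd a \<le> N - k" using Box.prems(3) by simp
  show ?case
  proof
    assume h: "(k, s) \<in> ks Wm Rm fm Vm (Box a)"
    show "Box a \<in> last s"
    proof (rule ccontr)
      assume n: "Box a \<notin> last s"
      obtain B where B: "atom k B" "step k (last s) B" "a \<notin> B" "Box a \<in> B"
        using witness[OF at Box.prems(2) n] by blast
      let ?t = "s @ [B]"
      have cht: "chain k ?t" using ch B(1,2) by (auto simp: chain_def successively_append_iff)
      have sub: "{\<theta> \<in> last s. \<exists>\<psi>. \<theta> = Box \<psi>} \<subseteq> {\<theta> \<in> B. \<exists>\<psi>. \<theta> = Box \<psi>}"
        using step_box[OF at B(2)] by auto
      have "{\<theta> \<in> last s. \<exists>\<psi>. \<theta> = Box \<psi>} \<noteq> {\<theta> \<in> B. \<exists>\<psi>. \<theta> = Box \<psi>}" using n B(4) by blast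
      with sub have psub: "{\<theta> \<in> last s. \<exists>\<psi>. \<theta> = Box \<psi>} \<subset> {\<theta> \<in> B. \<exists>\<psi>. \<theta> = Box \<psi>}" by (rule psubsetI)
      have finB: "finite {\<theta> \<in> B. \<exists>\<psi>. \<theta> = Box \<psi>}"
        by (rule finite_subset[OF _ finite_Cset[of 0]]) (use atom_sub0[OF B(1)] in auto)
      have lt: "bx (last s) < bx B" unfolding bx_def by (rule psubset_card_mono[OF finB psub])
      have leM: "bx B \<le> M" using bx_le[OF atom_sub0[OF B(1)]] .
      have "pot ?t \<le> pot s" using lt leM by (simp add: pot_def)
      then have tW: "(k, ?t) \<in> Wm" using Box.prems(1) cht by (auto simp: Wm_def Wk_def)
      have "Rm (k, s) (k, ?t)" using Box.prems(1) tW by (auto simp: Rm_def)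
      then have "(k, ?t) \<in> ks Wm Rm fm Vm a" using h by simp
      then have "a \<in> last ?t" using Box.IH[OF tW aC nda] by simp
      then show False using B(3) by simp
    qed
  next
    assume h: "Box a \<in> last s"
    show "(k, s) \<in> ks Wm Rm fm Vm (Box a)"
    proof (simp add: Box.prems(1), intro allI impI)
      fix y assume r: "Rm (k, s) y"
      then obtain u where u0: "fst y = k" "snd y = s @ u" "u \<noteq> []" "y \<in> Wm" by (auto simp: Rm_def)
      then have u: "y = (k, s @ u)" "u \<noteq> []" "y \<in> Wm" by (metis prod.collapse)+
      have cy: "chain k (s @ u)" using Wm_chain u by simp
      have "successively (step k) (s @ u)" using cy by (simp add: chain_def)
      then have "successively (step k) (last s # u)" using ch u(2)
        by (auto simp: successively_append_iff successively_Cons chain_def)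
      moreover have "\<forall>B\<in>set (last s # u). atom k B" using cy ch by (auto simp: chain_def)
      moreover have "last (s @ u) \<in> set u" using u(2) by simp
      ultimately have "a \<in> last (s @ u)" using chain_prop h by blast
      then show "y \<in> ks Wm Rm fm Vm a" using Box.IH[OF _ aC nda] u by simp
    qed
  qed
next
  case (Nxt a)
  have k: "k < N" using Nxt.prems(3) by simp
  have aC: "a \<in> Cset (Suc k)" using Cset_Nxt[OF k] Nxt.prems(2) by simp
  have nda: "nd a \<le> N - Suc k" using Nxt.prems(3) by simp
  have ch: "chain k s" using Wm_chain[OF Nxt.prems(1)] .
  have ne: "s \<noteq> []" using ch by (simp add: chain_def)
  have fe: "fm (k, s) = (Suc k, remdups_adj (map (prof k) s))" using k by (simp add: fm_def)
  have fW: "(Suc k, remdups_adj (map (prof k) s)) \<in> Wm" using fm_W[OF Nxt.prems(1)] fe by simp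
  have "(k, s) \<in> ks Wm Rm fm Vm (Nxt a) \<longleftrightarrow> (Suc k, remdups_adj (map (prof k) s)) \<in> ks Wm Rm fm Vm a"
    using Nxt.prems(1) fe by simp
  also have "\<dots> \<longleftrightarrow> a \<in> last (remdups_adj (map (prof k) s))" by (rule Nxt.IH[OF fW aC nda])
  also have "\<dots> \<longleftrightarrow> a \<in> prof k (last s)" using ne by (simp add: last_map)
  also have "\<dots> \<longleftrightarrow> Nxt a \<in> last s" using aC by (simp add: prof_def)
  finally show ?case .
qed

lemma countermodel: assumes "\<not> GLC \<phi>"
  shows "\<exists>x \<in> Wm. x \<notin> ks Wm Rm fm Vm \<phi>"
proof -
  obtain A where A: "atom 0 A" "\<phi> \<notin> A" using root[OF assms] by blast
  have c: "chain 0 [A]" using A(1) by (simp add: chain_def)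
  have "pot [A] \<le> L 0" by (simp add: pot_def L_def)
  then have W: "(0, [A]) \<in> Wm" using c by (simp add: Wm_def Wk_def)
  have "nd \<phi> \<le> N - 0" by (simp add: N_def)
  then have "(0, [A]) \<notin> ks Wm Rm fm Vm \<phi>" using truth[OF W phi_Cset] A(2) by simp
  then show ?thesis using W by blast
qed

lemma Vm_sub: "\<forall>p. Vm p \<subseteq> Wm" by (auto simp: Vm_def)

end


section \<open>From finite scattered DTS to Kripke frames\<close>

definition Rt :: "'a topology \<Rightarrow> 'a \<Rightarrow> 'a \<Rightarrow> bool" where
  "Rt T x y \<longleftrightarrow> x \<in> topspace T \<and> y \<in> topspace T \<and> x \<noteq> y \<and> x \<in> T closure_of {y}"

lemma closure_single_open: "x \<in> T closure_of {y} \<Longrightarrow> openin T U \<Longrightarrow> x \<in> U \<Longrightarrow> y \<in> U"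
  unfolding closure_of_def by auto

lemma derived_char:
  assumes fin: "finite (topspace T)" and A: "A \<subseteq> topspace T"
  shows "T derived_set_of A = {x \<in> topspace T. \<exists>y\<in>A. Rt T x y}"
proof
  show "{x \<in> topspace T. \<exists>y\<in>A. Rt T x y} \<subseteq> T derived_set_of A"
  proof
    fix x assume "x \<in> {x \<in> topspace T. \<exists>y\<in>A. Rt T x y}"
    then obtain y where y: "x \<in> topspace T" "y \<in> A" "x \<noteq> y" "x \<in> T closure_of {y}" by (auto simp: Rt_def)
    have "\<forall>U. x \<in> U \<and> openin T U \<longrightarrow> (\<exists>y'. y' \<noteq> x \<and> y' \<in> A \<and> y' \<in> U)"
      using y closure_single_open by metis
    then show "x \<in> T derived_set_of A" using y(1) unfolding derived_set_of_def by blast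
  qed
next
  show "T derived_set_of A \<subseteq> {x \<in> topspace T. \<exists>y\<in>A. Rt T x y}"
  proof
    fix x assume xd: "x \<in> T derived_set_of A"
    then have xX: "x \<in> topspace T" by (simp add: derived_set_of_def)
    show "x \<in> {x \<in> topspace T. \<exists>y\<in>A. Rt T x y}"
    proof (rule ccontr)
      assume "x \<notin> {x \<in> topspace T. \<exists>y\<in>A. Rt T x y}"
      then have nr: "\<forall>y\<in>A. \<not> Rt T x y" using xX by auto
      have "\<forall>y\<in>A - {x}. \<exists>U. openin T U \<and> x \<in> U \<and> y \<notin> U"
      proof
        fix y assume y: "y \<in> A - {x}"
        then have "x \<notin> T closure_of {y}" using nr xX A by (auto simp: Rt_def)
        then show "\<exists>U. openin T U \<and> x \<in> U \<and> y \<notin> U" using xX unfolding closure_of_def by auto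
      qed
      then obtain U where U: "\<And>y. y \<in> A - {x} \<Longrightarrow> openin T (U y) \<and> x \<in> U y \<and> y \<notin> U y" by metis
      have finA: "finite (A - {x})" using fin A by (meson finite_Diff finite_subset)
      let ?O = "(\<Inter>y \<in> A - {x}. U y) \<inter> topspace T"
      have "openin T ?O" using openin_INT[OF finA, of T U] U by blast
      moreover have "x \<in> ?O" using U xX by auto
      ultimately obtain y where "y \<noteq> x" "y \<in> A" "y \<in> ?O" using xd unfolding derived_set_of_def by blast
      then show False using U by auto
    qed
  qed
qed

lemma Rt_kframe:
  assumes fin: "finite (topspace T)" and sc: "scattered T" and cm: "continuous_map T T f"
  shows "kframe (topspace T) (Rt T) f"
  unfolding kframe_def
proof (intro conjI allI impI ballI)
  show "finite (topspace T)" by (rule fin)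
next
  fix x y assume "Rt T x y" then show "x \<in> topspace T" "y \<in> topspace T" by (auto simp: Rt_def)
next
  fix x show "\<not> Rt T x x" by (simp add: Rt_def)
next
  fix x y z assume xy: "Rt T x y" and yz: "Rt T y z"
  have "T closure_of {y} \<subseteq> T closure_of {z}"
  proof -
    have "{y} \<subseteq> T closure_of {z}" using yz by (simp add: Rt_def)
    then have "T closure_of {y} \<subseteq> T closure_of (T closure_of {z})" by (rule closure_of_mono)
    then show ?thesis by simp
  qed
  then have xz: "x \<in> T closure_of {z}" using xy by (auto simp: Rt_def)
  have "x \<noteq> z"
  proof
    assume e: "x = z"
    let ?S = "{x, y}"
    have S: "?S \<subseteq> topspace T" using xy by (auto simp: Rt_def)
    have "?S \<subseteq> T derived_set_of ?S"
      unfolding derived_char[OF fin S] using xy yz e by (auto simp: Rt_def)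
    then have "?S = {}" using sc S unfolding scattered_def by blast
    then show False by simp
  qed
  then show "Rt T x z" using xy yz xz by (auto simp: Rt_def)
next
  fix x assume "x \<in> topspace T" then show "f x \<in> topspace T"
    using cm by (auto simp: continuous_map_def)
next
  fix x y assume r: "Rt T x y"
  have "f ` (T closure_of {y}) \<subseteq> T closure_of (f ` {y})" by (rule continuous_map_image_closure_subset[OF cm])
  then have "f x \<in> T closure_of {f y}" using r by (auto simp: Rt_def)
  moreover have "f x \<in> topspace T" "f y \<in> topspace T" using r cm by (auto simp: Rt_def continuous_map_def)
  ultimately show "f x = f y \<or> Rt T (f x) (f y)" by (auto simp: Rt_def)
qed

lemma sem_ks:
  assumes fin: "finite (topspace T)" and sc: "scattered T" and cm: "continuous_map T T f"
    and V: "\<forall>p. \<nu> p \<subseteq> topspace T"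
  shows "sem T f \<nu> \<theta> = ks (topspace T) (Rt T) f \<nu> \<theta>"
proof (induction \<theta>)
  case (Box a)
  have sub: "topspace T - sem T f \<nu> a \<subseteq> topspace T" by blast
  have "sem T f \<nu> (Box a) = topspace T - {x \<in> topspace T. \<exists>y\<in>topspace T - sem T f \<nu> a. Rt T x y}"
    using derived_char[OF fin sub] by simp
  then show ?case using Box.IH by (simp add: Rt_def, blast)
qed auto

section \<open>From Kripke frames to finite scattered DTS\<close>

definition upT :: "'w set \<Rightarrow> ('w \<Rightarrow> 'w \<Rightarrow> bool) \<Rightarrow> 'w topology" where
  "upT W R = topology (\<lambda>U. U \<subseteq> W \<and> (\<forall>x\<in>U. \<forall>y. R x y \<longrightarrow> y \<in> U))"

context
  fixes W :: "'w set" and R :: "'w \<Rightarrow> 'w \<Rightarrow> bool" and f :: "'w \<Rightarrow> 'w"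
  assumes fr: "kframe W R f"
begin

lemma RW: "R x y \<Longrightarrow> x \<in> W \<and> y \<in> W" using fr by (simp add: kframe_def)
lemma Rtr: "R x y \<Longrightarrow> R y z \<Longrightarrow> R x z" using fr unfolding kframe_def by blast
lemma Rirr: "\<not> R x x" using fr by (simp add: kframe_def)

lemma upT_open: "openin (upT W R) U \<longleftrightarrow> U \<subseteq> W \<and> (\<forall>x\<in>U. \<forall>y. R x y \<longrightarrow> y \<in> U)"
proof -
  have "istopology (\<lambda>U. U \<subseteq> W \<and> (\<forall>x\<in>U. \<forall>y. R x y \<longrightarrow> y \<in> U))"
    unfolding istopology_def by blast
  then show ?thesis unfolding upT_def by simp
qed

lemma upT_topspace: "topspace (upT W R) = W"
proof
  show "topspace (upT W R) \<subseteq> W" unfolding topspace_def upT_open by blast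
  have "openin (upT W R) W" unfolding upT_open using RW by blast
  then show "W \<subseteq> topspace (upT W R)" by (rule openin_subset)
qed

lemma upT_derived: "upT W R derived_set_of A = {x \<in> W. \<exists>y\<in>A. R x y}"
proof
  show "upT W R derived_set_of A \<subseteq> {x \<in> W. \<exists>y\<in>A. R x y}"
  proof
    fix x assume x: "x \<in> upT W R derived_set_of A"
    then have xW: "x \<in> W" by (simp add: derived_set_of_def upT_topspace)
    let ?U = "insert x {y. R x y}"
    have "openin (upT W R) ?U" unfolding upT_open using xW RW Rtr by blast
    then obtain y where "y \<noteq> x" "y \<in> A" "y \<in> ?U" using x unfolding derived_set_of_def by blast
    then show "x \<in> {x \<in> W. \<exists>y\<in>A. R x y}" using xW by auto
  qed
next
  show "{x \<in> W. \<exists>y\<in>A. R x y} \<subseteq> upT W R derived_set_of A"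
  proof
    fix x assume "x \<in> {x \<in> W. \<exists>y\<in>A. R x y}"
    then obtain y where y: "x \<in> W" "y \<in> A" "R x y" by auto
    have "y \<noteq> x" using y(3) Rirr by auto
    then have "\<forall>U. x \<in> U \<and> openin (upT W R) U \<longrightarrow> (\<exists>y'. y' \<noteq> x \<and> y' \<in> A \<and> y' \<in> U)"
      using y unfolding upT_open by blast
    then show "x \<in> upT W R derived_set_of A" using y(1) unfolding derived_set_of_def upT_topspace by blast
  qed
qed

lemma upT_scattered: "scattered (upT W R)"
  unfolding scattered_def upT_topspace
proof (intro allI impI)
  fix S assume S: "S \<subseteq> W" "S \<subseteq> upT W R derived_set_of S"
  show "S = {}"
  proof (rule ccontr)
    assume "S \<noteq> {}"
    then obtain z where z: "z \<in> S" "\<forall>y\<in>S. \<not> R z y" using kframe_max[OF fr S(1)] by blast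
    then show False using S(2) unfolding upT_derived by blast
  qed
qed

lemma upT_DTS: "DTS (upT W R) f"
  unfolding DTS_def continuous_map_def upT_topspace
proof (intro conjI allI impI)
  show "f \<in> W \<rightarrow> W" using fr by (auto simp: kframe_def)
next
  fix U assume "openin (upT W R) U"
  then have U: "U \<subseteq> W" "\<forall>x\<in>U. \<forall>y. R x y \<longrightarrow> y \<in> U" by (auto simp: upT_open)
  have mo: "\<And>x y. R x y \<Longrightarrow> f x = f y \<or> R (f x) (f y)" using fr by (simp add: kframe_def)
  show "openin (upT W R) {x \<in> W. f x \<in> U}"
    unfolding upT_open using RW mo U by fastforce
qed

lemma upT_sem: "(\<forall>p. V p \<subseteq> W) \<Longrightarrow> sem (upT W R) f V \<theta> = ks W R f V \<theta>"
proof (induction \<theta>)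
  case (Box a)
  then show ?case using RW by (simp add: upT_topspace upT_derived, blast)
qed (auto simp: upT_topspace upT_derived)

end

theorem mainTheorem7:
  fixes \<phi> :: "'p form"
  shows "GLC \<phi> \<longleftrightarrow>
    (\<forall>(T :: nat topology) f. DTS T f \<and> finite (topspace T) \<and> scattered T
        \<longrightarrow> valid_on T f \<phi>)"
proof
  assume g: "GLC \<phi>"
  show "\<forall>(T :: nat topology) f. DTS T f \<and> finite (topspace T) \<and> scattered T \<longrightarrow> valid_on T f \<phi>"
  proof (intro allI impI)
    fix T :: "nat topology" and f
    assume h: "DTS T f \<and> finite (topspace T) \<and> scattered T"
    then have cm: "continuous_map T T f" and fin: "finite (topspace T)" and sc: "scattered T"
      by (auto simp: DTS_def)
    show "valid_on T f \<phi>" unfolding valid_on_def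
    proof (intro allI impI)
      fix \<nu> :: "'p \<Rightarrow> nat set" assume V: "\<forall>p. \<nu> p \<subseteq> topspace T"
      show "sem T f \<nu> \<phi> = topspace T"
        using sem_ks[OF fin sc cm V] ksound[OF Rt_kframe[OF fin sc cm] V g] by simp
    qed
  qed
next
  assume r: "\<forall>(T :: nat topology) f. DTS T f \<and> finite (topspace T) \<and> scattered T \<longrightarrow> valid_on T f \<phi>"
  show "GLC \<phi>"
  proof (rule ccontr)
    assume ng: "\<not> GLC \<phi>"
    interpret clos \<phi> .
    obtain x where x: "x \<in> Wm" "x \<notin> ks Wm Rm fm Vm \<phi>" using countermodel[OF ng] by blast
    obtain g :: "nat \<times> 'p form set list \<Rightarrow> nat" and n where g: "g ` Wm = {i. i < n}" "inj_on g Wm"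
      using finite_imp_inj_to_nat_seg[OF Wm_finite] by blast
    define h where "h = inv_into Wm g"
    define R' where "R' = (\<lambda>a b. a \<in> g ` Wm \<and> b \<in> g ` Wm \<and> Rm (h a) (h b))"
    define f' where "f' = (\<lambda>a. g (fm (h a)))"
    define V' where "V' = (\<lambda>p. g ` Vm p)"
    have fr: "kframe (g ` Wm) R' f'"
      using transport(1)[OF kframe_m g(2) Vm_sub] unfolding h_def R'_def f'_def by simp
    have tr: "g x \<in> ks (g ` Wm) R' f' V' \<phi> \<longleftrightarrow> x \<in> ks Wm Rm fm Vm \<phi>"
      using transport(2)[OF kframe_m g(2) Vm_sub x(1)] unfolding h_def R'_def f'_def V'_def by simp
    have V'sub: "\<forall>p. V' p \<subseteq> g ` Wm" using Vm_sub by (auto simp: V'_def)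
    let ?T = "upT (g ` Wm) R'"
    have "DTS ?T f' \<and> finite (topspace ?T) \<and> scattered ?T"
      using upT_DTS[OF fr] upT_scattered[OF fr] upT_topspace[OF fr] fr by (simp add: kframe_def)
    then have "valid_on ?T f' \<phi>" using r by blast
    then have "sem ?T f' V' \<phi> = topspace ?T" using V'sub upT_topspace[OF fr] by (simp add: valid_on_def)
    then have "ks (g ` Wm) R' f' V' \<phi> = g ` Wm" using upT_sem[OF fr V'sub] upT_topspace[OF fr] by simp
    then show False using tr x by auto
  qed
qed


end
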